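(* Let $G$ be finite and $z\in\mathbb C\setminus\{0\}$. If $\mu\in\mathrm{FA}(P)$ satisfies $\mathcal T'\mu=z\mu$, then the function $f_\mu:E\to\mathbb C$, $f_\mu(e)=\mu(\bar e)$, satisfies $Sf_\mu=zf_\mu$. Conversely, if $f\in\mathrm{Map}(E)$ satisfies $Sf=zf$, then $\mu_f(e_1,\dots,e_n):=z^{1-n}f(\overline{e_n})$ defines an element $\mu_f\in\mathrm{FA}(P)$ with $\mathcal T'\mu_f=z\mu_f$. The maps $\mu\mapsto f_\mu$ and $f\mapsto\mu_f$ are mutually inverse linear isomorphisms between $\{\mu\in\mathrm{FA}(P):\mathcal T'\mu=z\mu\}$ and $\{f\in\mathrm{Map}(E):Sf=zf\}$.
   Context: $G$ is a finite connected graph (no loops, no multiple edges, every vertex of degree $\ge2$); $E$ oriented edges with $\iota,\tau$ and opposite $\bar e$; turn $e\rightsquigarrow e'$ iff $\tau(e)=\iota(e')$, $e'\ne\bar e$. $P$ = infinite paths $(e_1,e_2,\dots)$ with $e_i\rightsquigarrow e_{i+1}$; $(\mathcal Tf)(e_1,\dots)=\sum_{e_0\rightsquigarrow e_1}f(e_0,e_1,\dots)$. Postal codes: finite paths $c=(c_1,\dots,c_m)$, $m\ge1$, with $c_i\rightsquigarrow c_{i+1}$; $\mathcal C_m$, $\mathcal C=\bigcup\mathcal C_m$; district $P_c$ = paths beginning with $c$; $\mathbf 1_c$ its indicator. $D_\infty$ = functions on $P$ depending only on finitely many initial edges. $\mathrm{FA}(P)=\{\mu:\mathcal C\to\mathbb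 C:\mu(c)=\sum_{e:c_m\rightsquigarrow e}\mu(c,e)\ \forall c\}$, where $(c,e)$ is the one-edge extension. Pairing: for $f\in D_m$, $\langle f,\mu\rangle=\sum_{c\in\mathcal C_m}f(c)\mu(c)$. Dual transfer operator $\mathcal T':\mathrm{FA}(P)\to\mathrm{FA}(P)$, $(\mathcal T'\mu)(c):=\langle\mathcal T\mathbf 1_c,\mu\rangle$; equivalently $\langle\mathcal Tf,\mu\rangle=\langle f,\mathcal T'\mu\rangle$ for $f\in D_\infty$. $(Sf)(e)=\sum_{e'\rightsquigarrow e}f(e')$. *)

theory Defs
  imports Complex_Main "HOL-Library.FuncSet"
begin

definition graph_ok :: "'v set \<Rightarrow> ('v \<Rightarrow> 'v \<Rightarrow> bool) \<Rightarrow> bool" where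
  "graph_ok V Adj \<longleftrightarrow> finite V \<and> V \<noteq> {}
     \<and> (\<forall>u w. Adj u w \<longrightarrow> u \<in> V \<and> w \<in> V)
     \<and> (\<forall>u w. Adj u w \<longrightarrow> Adj w u)
     \<and> (\<forall>u. \<not> Adj u u)
     \<and> (\<forall>u\<in>V. \<forall>w\<in>V. Adj\<^sup>*\<^sup>* u w)
     \<and> (\<forall>u\<in>V. card {w. Adj u w} \<ge> 2)"

definition oedges :: "('v \<Rightarrow> 'v \<Rightarrow> bool) \<Rightarrow> ('v \<times> 'v) set" where
  "oedges Adj = {(u, w). Adj u w}"

definition iota :: "'v \<times> 'v \<Rightarrow> 'v" where "iota e = fst e"
definition tau :: "'v \<times> 'v \<Rightarrow> 'v" where "tau e = snd e"
definition opp :: "'v \<times> 'v \<Rightarrow> 'v \<times> 'v" where "opp e = (snd e, fst e)"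

definition turn :: "('v \<Rightarrow> 'v \<Rightarrow> bool) \<Rightarrow> 'v \<times> 'v \<Rightarrow> 'v \<times> 'v \<Rightarrow> bool" where
  "turn Adj e e' \<longleftrightarrow> e \<in> oedges Adj \<and> e' \<in> oedges Adj \<and> tau e = iota e' \<and> e' \<noteq> opp e"

definition paths :: "('v \<Rightarrow> 'v \<Rightarrow> bool) \<Rightarrow> (nat \<Rightarrow> 'v \<times> 'v) set" where
  "paths Adj = {p. \<forall>i. turn Adj (p i) (p (Suc i))}"

definition codes :: "('v \<Rightarrow> 'v \<Rightarrow> bool) \<Rightarrow> ('v \<times> 'v) list set" where
  "codes Adj = {c. c \<noteq> [] \<and> set c \<subseteq> oedges Adj
                 \<and> (\<forall>i. Suc i < length c \<longrightarrow> turn Adj (c ! i) (c ! Suc i))}"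

definition codes_m :: "('v \<Rightarrow> 'v \<Rightarrow> bool) \<Rightarrow> nat \<Rightarrow> ('v \<times> 'v) list set" where
  "codes_m Adj m = {c \<in> codes Adj. length c = m}"

definition begins :: "(nat \<Rightarrow> 'v \<times> 'v) \<Rightarrow> ('v \<times> 'v) list \<Rightarrow> bool" where
  "begins p c \<longleftrightarrow> (\<forall>i < length c. p i = c ! i)"

definition ind :: "('v \<times> 'v) list \<Rightarrow> (nat \<Rightarrow> 'v \<times> 'v) \<Rightarrow> complex" where
  "ind c p = (if begins p c then 1 else 0)"

definition transfer :: "('v \<Rightarrow> 'v \<Rightarrow> bool) \<Rightarrow> ((nat \<Rightarrow> 'v \<times> 'v) \<Rightarrow> complex)
     \<Rightarrow> (nat \<Rightarrow> 'v \<times> 'v) \<Rightarrow> complex" where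
  "transfer Adj f p = (\<Sum>e0 \<in> {e0. turn Adj e0 (p 0)}. f (case_nat e0 p))"

text \<open>A chosen infinite path beginning with the code c (used to evaluate
  functions in D_m on codes of length m).\<close>
definition ext_path :: "('v \<Rightarrow> 'v \<Rightarrow> bool) \<Rightarrow> ('v \<times> 'v) list \<Rightarrow> nat \<Rightarrow> 'v \<times> 'v" where
  "ext_path Adj c = (SOME p. p \<in> paths Adj \<and> begins p c)"

definition pairing :: "('v \<Rightarrow> 'v \<Rightarrow> bool) \<Rightarrow> nat \<Rightarrow> ((nat \<Rightarrow> 'v \<times> 'v) \<Rightarrow> complex)
     \<Rightarrow> (('v \<times> 'v) list \<Rightarrow> complex) \<Rightarrow> complex" where
  "pairing Adj m f \<mu> = (\<Sum>c \<in> codes_m Adj m. f (ext_path Adj c) * \<mu> c)"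

text \<open>Finitely additive measures FA(P), as functions on codes (extended by 0).\<close>
definition FA :: "('v \<Rightarrow> 'v \<Rightarrow> bool) \<Rightarrow> (('v \<times> 'v) list \<Rightarrow> complex) set" where
  "FA Adj = {\<mu>. (\<forall>c \<in> codes Adj. \<mu> c = (\<Sum>e \<in> {e. turn Adj (last c) e}. \<mu> (c @ [e])))
               \<and> (\<forall>c. c \<notin> codes Adj \<longrightarrow> \<mu> c = 0)}"

text \<open>Dual transfer operator: (T' \<mu>)(c) = \<langle>T 1_c, \<mu>\<rangle>; T 1_c \<in> D_m for m = |c|.\<close>
definition dual_transfer :: "('v \<Rightarrow> 'v \<Rightarrow> bool) \<Rightarrow> (('v \<times> 'v) list \<Rightarrow> complex)
     \<Rightarrow> ('v \<times> 'v) list \<Rightarrow> complex" where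
  "dual_transfer Adj \<mu> c = (if c \<in> codes Adj
      then pairing Adj (length c) (transfer Adj (ind c)) \<mu> else 0)"

definition MapE :: "('v \<Rightarrow> 'v \<Rightarrow> bool) \<Rightarrow> ('v \<times> 'v \<Rightarrow> complex) set" where
  "MapE Adj = {f. \<forall>e. e \<notin> oedges Adj \<longrightarrow> f e = 0}"

definition Sop :: "('v \<Rightarrow> 'v \<Rightarrow> bool) \<Rightarrow> ('v \<times> 'v \<Rightarrow> complex) \<Rightarrow> 'v \<times> 'v \<Rightarrow> complex" where
  "Sop Adj f e = (if e \<in> oedges Adj then (\<Sum>e' \<in> {e'. turn Adj e' e}. f e') else 0)"

definition f_of_mu :: "('v \<Rightarrow> 'v \<Rightarrow> bool) \<Rightarrow> (('v \<times> 'v) list \<Rightarrow> complex) \<Rightarrow> 'v \<times> 'v \<Rightarrow> complex" where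
  "f_of_mu Adj \<mu> e = (if e \<in> oedges Adj then \<mu> [opp e] else 0)"

definition mu_of_f :: "('v \<Rightarrow> 'v \<Rightarrow> bool) \<Rightarrow> complex \<Rightarrow> ('v \<times> 'v \<Rightarrow> complex) \<Rightarrow> ('v \<times> 'v) list \<Rightarrow> complex" where
  "mu_of_f Adj z f c = (if c \<in> codes Adj then z powi (1 - int (length c)) * f (opp (last c)) else 0)"

definition FA_eig :: "('v \<Rightarrow> 'v \<Rightarrow> bool) \<Rightarrow> complex \<Rightarrow> (('v \<times> 'v) list \<Rightarrow> complex) set" where
  "FA_eig Adj z = {\<mu> \<in> FA Adj. dual_transfer Adj \<mu> = (\<lambda>c. z * \<mu> c)}"

definition S_eig :: "('v \<Rightarrow> 'v \<Rightarrow> bool) \<Rightarrow> complex \<Rightarrow> ('v \<times> 'v \<Rightarrow> complex) set" where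
  "S_eig Adj z = {f \<in> MapE Adj. Sop Adj f = (\<lambda>e. z * f e)}"

end

theory Submission
  imports Defs
begin


lemma fin_oedges: "graph_ok V Adj \<Longrightarrow> finite (oedges Adj)"
proof -
  assume g: "graph_ok V Adj"
  have "oedges Adj \<subseteq> V \<times> V" using g by (auto simp: graph_ok_def oedges_def)
  moreover have "finite V" using g by (simp add: graph_ok_def)
  ultimately show ?thesis by (meson finite_SigmaI finite_subset)
qed

lemma fin_turn: "graph_ok V Adj \<Longrightarrow> finite {e. turn Adj x e}"
  by (rule finite_subset[OF _ fin_oedges]) (auto simp: turn_def)

lemma fin_turn2: "graph_ok V Adj \<Longrightarrow> finite {e. turn Adj e x}"
  by (rule finite_subset[OF _ fin_oedges]) (auto simp: turn_def)

lemma succ_ex: assumes g: "graph_ok V Adj" and e: "e \<in> oedges Adj" shows "\<exists>e'. turn Adj e e'"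
proof -
  obtain u v where ev: "e = (u, v)" by (cases e)
  have a: "Adj u v" using e ev by (simp add: oedges_def)
  hence vV: "v \<in> V" using g by (auto simp: graph_ok_def)
  have c2: "card {w. Adj v w} \<ge> 2" using g vV by (auto simp: graph_ok_def)
  have "\<not> {w. Adj v w} \<subseteq> {u}"
  proof
    assume "{w. Adj v w} \<subseteq> {u}"
    hence "card {w. Adj v w} \<le> card {u}" by (intro card_mono) auto
    thus False using c2 by simp
  qed
  then obtain w where "Adj v w" "w \<noteq> u" by auto
  hence "turn Adj e (v, w)" using a ev by (auto simp: turn_def oedges_def tau_def iota_def opp_def)
  thus ?thesis by blast
qed

fun mkpath :: "('v \<Rightarrow> 'v \<Rightarrow> bool) \<Rightarrow> ('v \<times> 'v) list \<Rightarrow> nat \<Rightarrow> 'v \<times> 'v" where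
  "mkpath Adj c 0 = c ! 0"
| "mkpath Adj c (Suc i) = (if Suc i < length c then c ! Suc i else (SOME e'. turn Adj (mkpath Adj c i) e'))"

lemma mkpath_lt: "i < length c \<Longrightarrow> mkpath Adj c i = c ! i"
  by (cases i) auto

lemma mkpath_oe: assumes g: "graph_ok V Adj" and c: "c \<in> codes Adj" shows "mkpath Adj c i \<in> oedges Adj"
proof (induction i)
  case 0 thus ?case using c by (auto simp: codes_def)
next
  case (Suc i)
  show ?case
  proof (cases "Suc i < length c")
    case True thus ?thesis using c by (auto simp: codes_def)
  next
    case False
    have "turn Adj (mkpath Adj c i) (SOME e'. turn Adj (mkpath Adj c i) e')"
      using succ_ex[OF g Suc] by (rule someI_ex)
    hence "(SOME e'. turn Adj (mkpath Adj c i) e') \<in> oedges Adj" unfolding turn_def[of Adj "mkpath Adj c i"] by blast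
    thus ?thesis using False by simp
  qed
qed

lemma ext_path_ok: assumes g: "graph_ok V Adj" and c: "c \<in> codes Adj"
  shows "ext_path Adj c \<in> paths Adj \<and> begins (ext_path Adj c) c"
proof -
  have "mkpath Adj c \<in> paths Adj \<and> begins (mkpath Adj c) c"
  proof
    show "mkpath Adj c \<in> paths Adj" unfolding paths_def
    proof (intro CollectI allI)
      fix i
      show "turn Adj (mkpath Adj c i) (mkpath Adj c (Suc i))"
      proof (cases "Suc i < length c")
        case True thus ?thesis using c by (auto simp: codes_def mkpath_lt)
      next
        case False
        have "turn Adj (mkpath Adj c i) (SOME e'. turn Adj (mkpath Adj c i) e')"
          using succ_ex[OF g mkpath_oe[OF g c]] by (rule someI_ex)
        thus ?thesis using False by simp
      qed
    qed
    show "begins (mkpath Adj c) c" by (simp add: begins_def mkpath_lt)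
  qed
  thus ?thesis unfolding ext_path_def by (rule someI[where P="\<lambda>p. p \<in> paths Adj \<and> begins p c"])
qed

lemma code_tl: "c \<in> codes Adj \<Longrightarrow> length c \<ge> 2 \<Longrightarrow> tl c \<in> codes Adj"
  unfolding codes_def by (cases c) auto

lemma code_snoc: assumes cc: "c \<in> codes Adj" and t: "turn Adj (last c) e" shows "c @ [e] \<in> codes Adj"
proof -
  have c: "c \<noteq> []" "set c \<subseteq> oedges Adj" "\<And>i. Suc i < length c \<Longrightarrow> turn Adj (c ! i) (c ! Suc i)"
    using cc by (auto simp: codes_def)
  have e: "e \<in> oedges Adj" using t by (simp add: turn_def)
  have "turn Adj ((c @ [e]) ! i) ((c @ [e]) ! Suc i)" if i: "Suc i < length (c @ [e])" for i
  proof (cases "Suc i < length c")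
    case True thus ?thesis using c by (simp add: nth_append)
  next
    case False hence "i = length c - 1" using i by simp
    thus ?thesis using t c by (simp add: nth_append last_conv_nth)
  qed
  thus ?thesis using c e by (auto simp: codes_def)
qed

lemma transfer_val:
  assumes g: "graph_ok V Adj" and c: "c \<in> codes Adj" and c': "c' \<in> codes_m Adj (length c)"
  shows "transfer Adj (ind c) (ext_path Adj c') = (if \<exists>e. turn Adj (last c) e \<and> c' = tl c @ [e] then 1 else 0)"
proof -
  define p where "p = ext_path Adj c'"
  define m where "m = length c"
  have c'c: "c' \<in> codes Adj" and lc': "length c' = m" using c' by (auto simp: codes_m_def m_def)
  have m1: "m \<ge> 1" using c by (auto simp: codes_def m_def Suc_le_eq)
  have bp: "begins p c'" using ext_path_ok[OF g c'c] by (simp add: p_def)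
  hence pc': "\<And>i. i < m \<Longrightarrow> p i = c' ! i" using lc' by (simp add: begins_def)
  define Q where "Q = (\<forall>j. Suc j < m \<longrightarrow> c' ! j = c ! Suc j)"
  have ind_eq: "ind c (case_nat e0 p) = (if e0 = c ! 0 \<and> Q then 1 else 0)" for e0
  proof -
    have "begins (case_nat e0 p) c \<longleftrightarrow> e0 = c ! 0 \<and> Q"
    proof
      assume b: "begins (case_nat e0 p) c"
      have "e0 = c ! 0" using b m1 unfolding begins_def m_def by (metis One_nat_def Suc_le_lessD nat.case(1))
      moreover have Q unfolding Q_def
      proof (intro allI impI)
        fix j assume "Suc j < m"
        hence "case_nat e0 p (Suc j) = c ! Suc j" using b unfolding begins_def m_def by blast
        thus "c' ! j = c ! Suc j" using pc' \<open>Suc j < m\<close> by simp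
      qed
      ultimately show "e0 = c ! 0 \<and> Q" by simp
    next
      assume h: "e0 = c ! 0 \<and> Q"
      show "begins (case_nat e0 p) c" unfolding begins_def
      proof (intro allI impI)
        fix i assume i: "i < length c"
        show "case_nat e0 p i = c ! i"
        proof (cases i)
          case 0 thus ?thesis using h by simp
        next
          case (Suc j) thus ?thesis using h i pc'[of j] unfolding Q_def m_def by simp
        qed
      qed
    qed
    thus ?thesis by (simp add: ind_def)
  qed
  have c'ne0: "c' \<noteq> []" using lc' m1 by auto
  have "transfer Adj (ind c) p = (\<Sum>e0\<in>{e0. turn Adj e0 (p 0)}. if c ! 0 = e0 then (if Q then 1 else 0) else 0)"
    unfolding transfer_def by (intro sum.cong) (auto simp: ind_eq)
  also have "\<dots> = (if turn Adj (c ! 0) (p 0) \<and> Q then 1 else 0)"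
    by (subst sum.delta'[OF fin_turn2[OF g]]) simp
  also have "p 0 = hd c'" using pc'[of 0] m1 c'ne0 by (simp add: hd_conv_nth)
  also have "(turn Adj (c ! 0) (hd c') \<and> Q) \<longleftrightarrow> (\<exists>e. turn Adj (last c) e \<and> c' = tl c @ [e])"
  proof
    assume h: "turn Adj (c ! 0) (hd c') \<and> Q"
    have tk: "take (m - 1) c' = tl c"
      by (rule nth_equalityI) (use h lc' in \<open>auto simp: Q_def m_def nth_tl\<close>)
    have c'ne: "c' \<noteq> []" using lc' m1 by auto
    have eq: "c' = tl c @ [last c']" using tk lc' c'ne
      by (metis Suc_diff_1 butlast_conv_take m1 append_butlast_last_id One_nat_def less_eq_Suc_le diff_Suc_1)
    have "turn Adj (last c) (last c')"
    proof (cases "m = 1")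
      case True
      hence "last c = c ! 0" "last c' = hd c'" using lc' c'ne c unfolding m_def codes_def
        by (auto simp: last_conv_nth hd_conv_nth)
      thus ?thesis using h by simp
    next
      case False
      hence m2: "m \<ge> 2" using m1 by simp
      have "turn Adj (c' ! (m - 2)) (c' ! Suc (m - 2))" using c'c lc' m2 by (auto simp: codes_def)
      moreover have "c' ! (m - 2) = c ! Suc (m - 2)" using h m2 by (auto simp: Q_def)
      ultimately show ?thesis using m2 lc' c'ne c unfolding m_def codes_def
        by (auto simp: last_conv_nth Suc_diff_Suc numeral_2_eq_2)
    qed
    thus "\<exists>e. turn Adj (last c) e \<and> c' = tl c @ [e]" using eq by blast
  next
    assume "\<exists>e. turn Adj (last c) e \<and> c' = tl c @ [e]"
    then obtain e where t: "turn Adj (last c) e" and eq: "c' = tl c @ [e]" by blast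
    have Q unfolding Q_def using eq by (auto simp: nth_append nth_tl m_def)
    moreover have "turn Adj (c ! 0) (hd c')"
    proof (cases "m = 1")
      case True
      hence lc1: "length c = 1" by (simp add: m_def)
      have "tl c = []" using lc1 by (cases c) auto
      moreover have "last c = c ! 0" using lc1 by (cases c) auto
      ultimately show ?thesis using t eq by simp
    next
      case False
      hence m2: "m \<ge> 2" using m1 by simp
      have tne: "tl c \<noteq> []" using m2 unfolding m_def by (cases c) auto
      have "hd c' = hd (tl c)" using eq tne by simp
      also have "\<dots> = c ! 1" using tne by (cases c) (auto simp: hd_conv_nth)
      finally have "hd c' = c ! 1" .
      moreover have "turn Adj (c ! 0) (c ! Suc 0)" using c m2 by (auto simp: codes_def m_def)
      ultimately show ?thesis by simp
    qed
    ultimately show "turn Adj (c ! 0) (hd c') \<and> Q" by simp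
  qed
  finally show ?thesis by (simp add: p_def)
qed

lemma tl_snoc_code: assumes c: "c \<in> codes Adj" and t: "turn Adj (last c) e"
  shows "tl c @ [e] \<in> codes_m Adj (length c)"
proof (cases "length c \<ge> 2")
  case True
  have "last (tl c) = last c" using True by (cases c) auto
  hence "tl c @ [e] \<in> codes Adj" using code_snoc[OF code_tl[OF c True]] t by simp
  thus ?thesis using True by (auto simp: codes_m_def)
next
  case False
  have l1: "length c = 1" using c False by (cases c) (auto simp: codes_def Suc_le_eq)
  have "tl c = []" using l1 by (cases c) auto
  note this l1
  moreover have "e \<in> oedges Adj" using t by (simp add: turn_def)
  ultimately show ?thesis by (auto simp: codes_m_def codes_def)
qed

lemma fin_codes_m: "graph_ok V Adj \<Longrightarrow> finite (codes_m Adj m)"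
  by (rule finite_subset[OF _ finite_lists_length_eq[OF fin_oedges, of V Adj m]]) (auto simp: codes_m_def codes_def)

lemma DT: assumes g: "graph_ok V Adj" and c: "c \<in> codes Adj"
  shows "dual_transfer Adj \<mu> c = (\<Sum>e\<in>{e. turn Adj (last c) e}. \<mu> (tl c @ [e]))"
proof -
  define T where "T = {e. turn Adj (last c) e}"
  define I where "I = (\<lambda>e. tl c @ [e]) ` T"
  have IS: "I \<subseteq> codes_m Adj (length c)" using tl_snoc_code[OF c] by (auto simp: I_def T_def)
  have "dual_transfer Adj \<mu> c = (\<Sum>c'\<in>codes_m Adj (length c). transfer Adj (ind c) (ext_path Adj c') * \<mu> c')"
    using c by (simp add: dual_transfer_def pairing_def)
  also have "\<dots> = (\<Sum>c'\<in>codes_m Adj (length c). (if c' \<in> I then \<mu> c' else 0))"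
  proof (intro sum.cong refl)
    fix c' assume c': "c' \<in> codes_m Adj (length c)"
    have iff: "(\<exists>e. turn Adj (last c) e \<and> c' = tl c @ [e]) \<longleftrightarrow> c' \<in> I" unfolding I_def T_def by blast
    have tv: "transfer Adj (ind c) (ext_path Adj c') = (if c' \<in> I then 1 else 0)"
      unfolding transfer_val[OF g c c'] iff ..
    show "transfer Adj (ind c) (ext_path Adj c') * \<mu> c' = (if c' \<in> I then \<mu> c' else 0)"
      unfolding tv by simp
  qed
  also have "\<dots> = (\<Sum>c'\<in>I. \<mu> c')"
  proof -
    have "codes_m Adj (length c) \<inter> I = I" using IS by blast
    thus ?thesis using sum.inter_restrict[OF fin_codes_m[OF g, of "length c"], of \<mu> I] by simp
  qed
  also have "\<dots> = (\<Sum>e\<in>T. \<mu> (tl c @ [e]))" unfolding I_def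
    by (subst sum.reindex) (auto simp: inj_on_def)
  finally show ?thesis by (simp add: T_def)
qed

lemma opp_opp[simp]: "opp (opp e) = e" by (simp add: opp_def)

lemma oe_opp: "graph_ok V Adj \<Longrightarrow> e \<in> oedges Adj \<Longrightarrow> opp e \<in> oedges Adj"
  by (auto simp: graph_ok_def oedges_def opp_def)

lemma turn_opp: "graph_ok V Adj \<Longrightarrow> turn Adj (opp e) (opp e') \<longleftrightarrow> turn Adj e' e"
  unfolding turn_def using oe_opp[of V Adj e] oe_opp[of V Adj e'] oe_opp[of V Adj "opp e"] oe_opp[of V Adj "opp e'"]
  by (auto simp: tau_def iota_def opp_def)

lemma img1: assumes g: "graph_ok V Adj" shows "{x. turn Adj (opp a) x} = opp ` {e'. turn Adj e' a}"
proof (rule set_eqI, rule iffI)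
  fix x assume "x \<in> {x. turn Adj (opp a) x}"
  hence "turn Adj (opp a) (opp (opp x))" by simp
  hence "turn Adj (opp x) a" using turn_opp[OF g] by blast
  thus "x \<in> opp ` {e'. turn Adj e' a}" by (metis image_eqI mem_Collect_eq opp_opp)
next
  fix x assume "x \<in> opp ` {e'. turn Adj e' a}"
  then obtain e' where "x = opp e'" "turn Adj e' a" by auto
  thus "x \<in> {x. turn Adj (opp a) x}" using turn_opp[OF g] by blast
qed

lemma img2: assumes g: "graph_ok V Adj" shows "{x. turn Adj x (opp a)} = opp ` {e. turn Adj a e}"
proof (rule set_eqI, rule iffI)
  fix x assume "x \<in> {x. turn Adj x (opp a)}"
  hence "turn Adj (opp (opp x)) (opp a)" by simp
  hence "turn Adj a (opp x)" using turn_opp[OF g] by blast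
  thus "x \<in> opp ` {e. turn Adj a e}" by (metis image_eqI mem_Collect_eq opp_opp)
next
  fix x assume "x \<in> opp ` {e. turn Adj a e}"
  then obtain e where "x = opp e" "turn Adj a e" by auto
  thus "x \<in> {x. turn Adj x (opp a)}" using turn_opp[OF g] by blast
qed

lemma inj_opp: "inj_on opp A" by (metis inj_on_def opp_opp)

lemma sum_opp1: "graph_ok V Adj \<Longrightarrow> (\<Sum>x\<in>{x. turn Adj (opp a) x}. h x) = (\<Sum>e\<in>{e'. turn Adj e' a}. h (opp e))"
  by (simp add: img1 sum.reindex[OF inj_opp])

lemma sum_opp2: "graph_ok V Adj \<Longrightarrow> (\<Sum>x\<in>{x. turn Adj x (opp a)}. h x) = (\<Sum>e\<in>{e. turn Adj a e}. h (opp e))"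
  by (simp add: img2 sum.reindex[OF inj_opp])



lemma single_code: "e \<in> oedges Adj \<Longrightarrow> [e] \<in> codes Adj"
  by (simp add: codes_def)

lemma last_oe: "c \<in> codes Adj \<Longrightarrow> last c \<in> oedges Adj"
  unfolding codes_def by auto

lemma FA_DT: assumes g: "graph_ok V Adj" and mu: "\<mu> \<in> FA Adj" and c: "c \<in> codes Adj" and l: "length c \<ge> 2"
  shows "dual_transfer Adj \<mu> c = \<mu> (tl c)"
proof -
  have "last (tl c) = last c" using l by (cases c) auto
  thus ?thesis using DT[OF g c] mu code_tl[OF c l] by (simp add: FA_def)
qed

lemma part1: assumes g: "graph_ok V Adj" and mu: "\<mu> \<in> FA Adj" and ev: "dual_transfer Adj \<mu> = (\<lambda>c. z * \<mu> c)"
  shows "Sop Adj (f_of_mu Adj \<mu>) = (\<lambda>e. z * f_of_mu Adj \<mu> e)"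
proof (rule ext)
  fix e
  show "Sop Adj (f_of_mu Adj \<mu>) e = z * f_of_mu Adj \<mu> e"
  proof (cases "e \<in> oedges Adj")
    case False thus ?thesis by (simp add: Sop_def f_of_mu_def)
  next
    case True
    have "Sop Adj (f_of_mu Adj \<mu>) e = (\<Sum>e'\<in>{e'. turn Adj e' e}. \<mu> [opp e'])"
      unfolding Sop_def using True
    proof (simp only: if_True, intro sum.cong refl)
      fix x assume "x \<in> {e'. turn Adj e' e}"
      hence "x \<in> oedges Adj" by (simp add: turn_def)
      thus "f_of_mu Adj \<mu> x = \<mu> [opp x]" by (simp add: f_of_mu_def)
    qed
    also have "\<dots> = (\<Sum>x\<in>{x. turn Adj (opp e) x}. \<mu> [x])" by (rule sum_opp1[OF g, symmetric])
    also have "\<dots> = dual_transfer Adj \<mu> [opp e]" using DT[OF g single_code[OF oe_opp[OF g True]]] by simp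
    also have "\<dots> = z * f_of_mu Adj \<mu> e" using ev True by (simp add: f_of_mu_def)
    finally show ?thesis .
  qed
qed

lemma powi_step: "(z::complex) \<noteq> 0 \<Longrightarrow> z powi (1 - int n) = z * z powi (- int n)"
  using power_int_add_1'[of z "- int n"] by simp

lemma part2a: assumes g: "graph_ok V Adj" and z: "z \<noteq> 0" and f: "f \<in> MapE Adj" and ev: "Sop Adj f = (\<lambda>e. z * f e)"
  shows "mu_of_f Adj z f \<in> FA Adj"
  unfolding FA_def
proof (intro CollectI conjI ballI allI impI)
  fix c assume c: "c \<notin> codes Adj" thus "mu_of_f Adj z f c = 0" by (simp add: mu_of_f_def)
next
  fix c assume c: "c \<in> codes Adj"
  have oe: "opp (last c) \<in> oedges Adj" using oe_opp[OF g last_oe[OF c]] .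
  have "(\<Sum>e\<in>{e. turn Adj (last c) e}. mu_of_f Adj z f (c @ [e]))
      = (\<Sum>e\<in>{e. turn Adj (last c) e}. z powi (- int (length c)) * f (opp e))"
    using code_snoc[OF c] by (intro sum.cong refl) (simp add: mu_of_f_def)
  also have "\<dots> = z powi (- int (length c)) * (\<Sum>x\<in>{x. turn Adj x (opp (last c))}. f x)"
    by (simp add: sum_distrib_left sum_opp2[OF g])
  also have "(\<Sum>x\<in>{x. turn Adj x (opp (last c))}. f x) = Sop Adj f (opp (last c))"
    using oe by (simp add: Sop_def)
  also have "\<dots> = z * f (opp (last c))" using ev by simp
  also have "z powi (- int (length c)) * (z * f (opp (last c))) = mu_of_f Adj z f c"
    using c powi_step[OF z, of "length c"] by (simp add: mu_of_f_def)
  finally show "mu_of_f Adj z f c = (\<Sum>e\<in>{e. turn Adj (last c) e}. mu_of_f Adj z f (c @ [e]))" by simp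
qed

lemma part2b: assumes g: "graph_ok V Adj" and z: "z \<noteq> 0" and f: "f \<in> MapE Adj" and ev: "Sop Adj f = (\<lambda>e. z * f e)"
  shows "dual_transfer Adj (mu_of_f Adj z f) = (\<lambda>c. z * mu_of_f Adj z f c)"
proof (rule ext)
  fix c
  show "dual_transfer Adj (mu_of_f Adj z f) c = z * mu_of_f Adj z f c"
  proof (cases "c \<in> codes Adj")
    case False thus ?thesis by (simp add: dual_transfer_def mu_of_f_def)
  next
    case c: True
    show ?thesis
    proof (cases "length c \<ge> 2")
      case True
      have lt: "last (tl c) = last c" using True by (cases c) auto
      have "dual_transfer Adj (mu_of_f Adj z f) c = mu_of_f Adj z f (tl c)"
        by (rule FA_DT[OF g part2a[OF g z f ev] c True])
      also have "\<dots> = z powi (1 - int (length c - 1)) * f (opp (last c))"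
        using code_tl[OF c True] lt by (simp add: mu_of_f_def)
      also have "\<dots> = z * mu_of_f Adj z f c"
      proof -
        obtain k where k: "length c = Suc k" using True by (cases "length c") auto
        have "z powi (1 - int (length c - 1)) = z * z powi (1 - int (length c))"
          using powi_step[OF z, of k] k by simp
        thus ?thesis using c by (simp add: mu_of_f_def)
      qed
      finally show ?thesis .
    next
      case False
      have l0: "length c = 1" using c False by (cases c) (auto simp: codes_def Suc_le_eq)
      have "tl c = []" using l0 by (cases c) auto
      note l1 = l0 this
      have oe: "opp (last c) \<in> oedges Adj" using oe_opp[OF g last_oe[OF c]] .
      have "dual_transfer Adj (mu_of_f Adj z f) c = (\<Sum>e\<in>{e. turn Adj (last c) e}. f (opp e))"
        unfolding DT[OF g c] \<open>tl c = []\<close> append_Nil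
      proof (intro sum.cong refl)
        fix x assume "x \<in> {e. turn Adj (last c) e}"
        hence "[x] \<in> codes Adj" by (intro single_code) (simp add: turn_def)
        thus "mu_of_f Adj z f [x] = f (opp x)" by (simp add: mu_of_f_def)
      qed
      also have "\<dots> = (\<Sum>x\<in>{x. turn Adj x (opp (last c))}. f x)" by (simp add: sum_opp2[OF g])
      also have "\<dots> = Sop Adj f (opp (last c))" using oe by (simp add: Sop_def)
      also have "\<dots> = z * mu_of_f Adj z f c" using ev c l1 by (simp add: mu_of_f_def)
      finally show ?thesis .
    qed
  qed
qed

lemma powlem: assumes g: "graph_ok V Adj" and z: "z \<noteq> 0" and mu: "\<mu> \<in> FA_eig Adj z"
  shows "c \<in> codes Adj \<Longrightarrow> \<mu> c = z powi (1 - int (length c)) * \<mu> [last c]"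
proof (induction "length c" arbitrary: c)
  case 0 thus ?case by (simp add: codes_def)
next
  case (Suc n)
  show ?case
  proof (cases n)
    case 0
    then obtain x where cx: "c = [x]" using Suc.hyps(2) by (cases c) auto
    show ?thesis unfolding cx by simp
  next
    case (Suc k)
    hence l2: "length c \<ge> 2" using Suc.hyps(2) by simp
    have lt: "last (tl c) = last c" using l2 by (cases c) auto
    have fa: "\<mu> \<in> FA Adj" and ev: "dual_transfer Adj \<mu> = (\<lambda>c. z * \<mu> c)" using mu by (auto simp: FA_eig_def)
    have "z * \<mu> c = \<mu> (tl c)" using FA_DT[OF g fa Suc.prems l2] fun_cong[OF ev, of c] by simp
    also have "\<dots> = z powi (1 - int n) * \<mu> [last c]"
    proof -
      have ln: "n = length (tl c)" using Suc.hyps(2) by simp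
      show ?thesis using Suc.hyps(1)[OF ln code_tl[OF Suc.prems l2]] lt ln by simp
    qed
    also have "\<dots> = z * (z powi (1 - int (length c)) * \<mu> [last c])"
      using powi_step[OF z, of n] Suc.hyps(2)[symmetric] by simp
    finally show ?thesis using z by simp
  qed
qed

theorem mainTheorem13:
  fixes V :: "'v set" and Adj :: "'v \<Rightarrow> 'v \<Rightarrow> bool" and z :: complex
  assumes "graph_ok V Adj" and "z \<noteq> 0"
  shows "(\<forall>\<mu> \<in> FA Adj. dual_transfer Adj \<mu> = (\<lambda>c. z * \<mu> c) \<longrightarrow>
            Sop Adj (f_of_mu Adj \<mu>) = (\<lambda>e. z * f_of_mu Adj \<mu> e))
    \<and> (\<forall>f \<in> MapE Adj. Sop Adj f = (\<lambda>e. z * f e) \<longrightarrow>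
            mu_of_f Adj z f \<in> FA Adj
          \<and> dual_transfer Adj (mu_of_f Adj z f) = (\<lambda>c. z * mu_of_f Adj z f c))
    \<and> bij_betw (f_of_mu Adj) (FA_eig Adj z) (S_eig Adj z)
    \<and> bij_betw (mu_of_f Adj z) (S_eig Adj z) (FA_eig Adj z)
    \<and> (\<forall>\<mu> \<in> FA_eig Adj z. mu_of_f Adj z (f_of_mu Adj \<mu>) = \<mu>)
    \<and> (\<forall>f \<in> S_eig Adj z. f_of_mu Adj (mu_of_f Adj z f) = f)
    \<and> (\<forall>a b \<mu> \<nu>. f_of_mu Adj (\<lambda>c. a * \<mu> c + b * \<nu> c)
                = (\<lambda>e. a * f_of_mu Adj \<mu> e + b * f_of_mu Adj \<nu> e))
    \<and> (\<forall>a b f g. mu_of_f Adj z (\<lambda>e. a * f e + b * g e)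
                = (\<lambda>c. a * mu_of_f Adj z f c + b * mu_of_f Adj z g c))"
  proof -
  have g: "graph_ok V Adj" and z: "z \<noteq> 0" using assms by auto
  have P1: "\<forall>\<mu> \<in> FA Adj. dual_transfer Adj \<mu> = (\<lambda>c. z * \<mu> c) \<longrightarrow>
            Sop Adj (f_of_mu Adj \<mu>) = (\<lambda>e. z * f_of_mu Adj \<mu> e)"
    using part1[OF g] by blast
  have P2: "\<forall>f \<in> MapE Adj. Sop Adj f = (\<lambda>e. z * f e) \<longrightarrow>
            mu_of_f Adj z f \<in> FA Adj
          \<and> dual_transfer Adj (mu_of_f Adj z f) = (\<lambda>c. z * mu_of_f Adj z f c)"
    using part2a[OF g z] part2b[OF g z] by blast
  have inv1: "\<forall>\<mu> \<in> FA_eig Adj z. mu_of_f Adj z (f_of_mu Adj \<mu>) = \<mu>"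
  proof
    fix \<mu> assume mu: "\<mu> \<in> FA_eig Adj z"
    show "mu_of_f Adj z (f_of_mu Adj \<mu>) = \<mu>"
    proof (rule ext)
      fix c
      show "mu_of_f Adj z (f_of_mu Adj \<mu>) c = \<mu> c"
      proof (cases "c \<in> codes Adj")
        case True
        have "opp (last c) \<in> oedges Adj" using oe_opp[OF g last_oe[OF True]] .
        hence "mu_of_f Adj z (f_of_mu Adj \<mu>) c = z powi (1 - int (length c)) * \<mu> [last c]"
          using True by (simp add: mu_of_f_def f_of_mu_def)
        also have "\<dots> = \<mu> c" using powlem[OF g z mu True] by simp
        finally show ?thesis .
      next
        case False
        thus ?thesis using mu by (simp add: mu_of_f_def FA_eig_def FA_def)
      qed
    qed
  qed
  have inv2: "\<forall>f \<in> S_eig Adj z. f_of_mu Adj (mu_of_f Adj z f) = f"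
  proof
    fix f assume f: "f \<in> S_eig Adj z"
    show "f_of_mu Adj (mu_of_f Adj z f) = f"
    proof (rule ext)
      fix e
      show "f_of_mu Adj (mu_of_f Adj z f) e = f e"
      proof (cases "e \<in> oedges Adj")
        case True
        have "[opp e] \<in> codes Adj" using single_code[OF oe_opp[OF g True]] .
        thus ?thesis using True by (simp add: f_of_mu_def mu_of_f_def)
      next
        case False
        have "f \<in> MapE Adj" using f by (simp add: S_eig_def)
        hence "f e = 0" using False unfolding MapE_def by blast
        thus ?thesis using False by (simp add: f_of_mu_def)
      qed
    qed
  qed
  have im1: "f_of_mu Adj ` FA_eig Adj z \<subseteq> S_eig Adj z"
  proof
    fix f assume "f \<in> f_of_mu Adj ` FA_eig Adj z"
    then obtain \<mu> where mu: "\<mu> \<in> FA_eig Adj z" and f: "f = f_of_mu Adj \<mu>" by blast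
    have "f \<in> MapE Adj" using f by (simp add: MapE_def f_of_mu_def)
    moreover have "Sop Adj f = (\<lambda>e. z * f e)" using P1 mu f by (simp add: FA_eig_def)
    ultimately show "f \<in> S_eig Adj z" by (simp add: S_eig_def)
  qed
  have im2: "mu_of_f Adj z ` S_eig Adj z \<subseteq> FA_eig Adj z"
  proof
    fix \<mu> assume "\<mu> \<in> mu_of_f Adj z ` S_eig Adj z"
    then obtain f where f: "f \<in> S_eig Adj z" and mu: "\<mu> = mu_of_f Adj z f" by blast
    show "\<mu> \<in> FA_eig Adj z" using P2 f mu by (simp add: S_eig_def FA_eig_def)
  qed
  have B1: "bij_betw (f_of_mu Adj) (FA_eig Adj z) (S_eig Adj z)"
    by (rule bij_betw_byWitness[OF inv1 inv2 im1 im2])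
  have B2: "bij_betw (mu_of_f Adj z) (S_eig Adj z) (FA_eig Adj z)"
    by (rule bij_betw_byWitness[OF inv2 inv1 im2 im1])
  have L1: "\<forall>a b \<mu> \<nu>. f_of_mu Adj (\<lambda>c. a * \<mu> c + b * \<nu> c)
                = (\<lambda>e. a * f_of_mu Adj \<mu> e + b * f_of_mu Adj \<nu> e)"
    by (simp add: fun_eq_iff f_of_mu_def)
  have L2: "\<forall>a b f g. mu_of_f Adj z (\<lambda>e. a * f e + b * g e)
                = (\<lambda>c. a * mu_of_f Adj z f c + b * mu_of_f Adj z g c)"
    by (simp add: fun_eq_iff mu_of_f_def algebra_simps)
  show ?thesis using P1 P2 B1 B2 inv1 inv2 L1 L2 by blast
qed

end
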